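(* The only novel partition of length $4$ is $(1,1,1,1)$.
   Context: An integer partition is $\lambda=(\lambda_1,\dots,\lambda_k)$ with integers $\lambda_1\ge\dots\ge\lambda_k\ge 1$; $k$ is its length. For $v\in\mathbb{Z}^k$ let $v^{\perp B}=\{x\in\{-1,1\}^k: v\cdot x=0\}$; $\lambda^{\perp B}$ is this set for $(\lambda_1,\dots,\lambda_k)$. $V_\lambda\subset\mathbb{Z}^k$ is the set of vectors obtained from $(\lambda_1,\dots,\lambda_k)$ by permuting coordinates and changing signs of some coordinates, with first coordinate positive. For $I\subset\{1,\dots,m\}$, $\mathrm{Proj}_I:\{-1,1\}^m\to\{-1,1\}^{|I|}$ keeps the coordinates indexed by $I$. Reduction: for partitions $\mu$ of length $m$ and $\lambda$ of length $k\le m$, $\mu\Rightarrow\lambda$ iff there exist $I\subset\{1,\dots,m\}$, $|I|=k$, and $v\in V_\lambda$ with $\mathrm{Proj}_I(\mu^{\perp B})\subset v^{\perp B}$. $\mu$ strictly reduces to $\lambda$ iff $\mu\Rightarrow\lambda$ and not $\lambda\Rightarrow\mu$. Partitions $\lambda,\mu$ of the same length are equivalent iff there is $w\in V_\mu$ with $\lambda^{\perp B}=w^{\perp B}$. A partition $\lambda$ is novel iff $\lambda^{\perp B}\neq\emptyset$, $\lambda$ strictly reduces to no partition, and $\lambda$ is lexicographically smallest among partitions equivalent to it. *)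

theory Defs
  imports "HOL-Library.Multiset"
begin

text \<open>Integer vectors of length k are int lists of length k; coordinates are 0-indexed.\<close>

definition is_partition :: "int list \<Rightarrow> bool" where
  "is_partition l \<longleftrightarrow> l \<noteq> [] \<and> sorted_wrt (\<ge>) l \<and> (\<forall>a\<in>set l. a \<ge> 1)"

definition sign_vectors :: "nat \<Rightarrow> int list set" where
  "sign_vectors k = {x. length x = k \<and> set x \<subseteq> {-1, 1}}"

definition dotp :: "int list \<Rightarrow> int list \<Rightarrow> int" where
  "dotp v x = sum_list (map2 (*) v x)"

definition perpB :: "int list \<Rightarrow> int list set" where
  "perpB v = {x \<in> sign_vectors (length v). dotp v x = 0}"

definition Vset :: "int list \<Rightarrow> int list set" where
  "Vset l = {v. \<exists>p s. mset p = mset l \<and> s \<in> sign_vectors (length l) \<and>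
                     v = map2 (*) s p \<and> v \<noteq> [] \<and> hd v > 0}"

definition Proj :: "nat set \<Rightarrow> int list \<Rightarrow> int list" where
  "Proj I x = nths x I"

definition reduces :: "int list \<Rightarrow> int list \<Rightarrow> bool" (infix "\<Rrightarrow>" 50) where
  "reduces mu l \<longleftrightarrow> length l \<le> length mu \<and>
     (\<exists>I v. I \<subseteq> {0..<length mu} \<and> card I = length l \<and> v \<in> Vset l \<and>
            Proj I ` perpB mu \<subseteq> perpB v)"

definition strictly_reduces :: "int list \<Rightarrow> int list \<Rightarrow> bool" where
  "strictly_reduces mu l \<longleftrightarrow> reduces mu l \<and> \<not> reduces l mu"

definition equivalent :: "int list \<Rightarrow> int list \<Rightarrow> bool" where
  "equivalent l mu \<longleftrightarrow> length l = length mu \<and> (\<exists>w\<in>Vset mu. perpB l = perpB w)"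

definition lex_le :: "int list \<Rightarrow> int list \<Rightarrow> bool" where
  "lex_le a b \<longleftrightarrow> a = b \<or> (a, b) \<in> lexord {(x, y). x < y}"

definition novel :: "int list \<Rightarrow> bool" where
  "novel l \<longleftrightarrow> is_partition l \<and> perpB l \<noteq> {} \<and>
     (\<forall>mu. is_partition mu \<longrightarrow> \<not> strictly_reduces l mu) \<and>
     (\<forall>mu. is_partition mu \<and> equivalent l mu \<longrightarrow> lex_le l mu)"

end

theory Submission imports Defs begin

lemma len4: "length xs = 4 \<Longrightarrow> \<exists>a b c d. xs = [a,b,c,d]"
  by (auto simp: numeral_eq_Suc length_Suc_conv)
lemma len3: "length xs = 3 \<Longrightarrow> \<exists>a b c. xs = [a,b,c]"
  by (auto simp: numeral_eq_Suc length_Suc_conv)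
lemma len2: "length xs = 2 \<Longrightarrow> \<exists>a b. xs = [a,b]"
  by (auto simp: numeral_eq_Suc length_Suc_conv)
lemma len1: "length xs = 1 \<Longrightarrow> \<exists>a. xs = [a]"
  by (auto simp: length_Suc_conv)

lemma nths4: "nths [a,b,c,d] I = (if 0\<in>I then [a] else []) @ (if 1\<in>I then [b] else [])
   @ (if 2\<in>I then [c] else []) @ (if 3\<in>I then [d] else [])"
  by (simp add: nths_Cons numeral_eq_Suc)

lemma cardI: "I \<subseteq> {0..<4::nat} \<Longrightarrow> card I = length (filter (\<lambda>i. i\<in>I) [0,1,2,3])"
proof -
  assume "I \<subseteq> {0..<4}"
  then have "\<And>x. x\<in>I \<Longrightarrow> x=0\<or>x=1\<or>x=2\<or>x=3" by auto
  then have "I = set (filter (\<lambda>i. i\<in>I) [0,1,2,3])" by auto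
  moreover have "distinct (filter (\<lambda>i. i\<in>I) [0,1,2,3::nat])" by simp
  ultimately show ?thesis by (metis distinct_card)
qed

lemma Vset_abs:
  assumes "v \<in> Vset mu" "is_partition mu"
  shows "mset (map abs v) = mset mu \<and> hd v > 0 \<and> v \<noteq> []"
proof -
  obtain p s where ps: "mset p = mset mu" "s \<in> sign_vectors (length mu)"
    "v = map2 (*) s p" "v \<noteq> []" "hd v > 0"
    using assms(1) unfolding Vset_def by blast
  have lp: "length p = length mu" using ps(1) by (metis size_mset)
  have sp: "set p = set mu" using ps(1) by (metis set_mset_mset)
  have ls: "length s = length mu" "set s \<subseteq> {-1,1}" using ps(2) by (auto simp: sign_vectors_def)
  have pos: "\<forall>a\<in>set p. a \<ge> 1" using sp assms(2) by (auto simp: is_partition_def)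
  have "map abs v = p"
  proof (rule nth_equalityI)
    show "length (map abs v) = length p" using ps(3) lp ls by simp
    fix i assume "i < length (map abs v)"
    then have i: "i < length p" "i < length s" using ps(3) lp ls by auto
    have "s ! i \<in> {-1,1}" using ls(2) i(2) nth_mem by blast
    moreover have "p ! i \<ge> 1" using pos i(1) nth_mem by blast
    ultimately show "map abs v ! i = p ! i" using ps(3) i by (auto simp: abs_mult)
  qed
  then show ?thesis using ps by auto
qed

lemma in_perp1: "(x::int list) \<in> {[1,1,-1,-1],[1,-1,1,-1],[1,-1,-1,1],[-1,-1,1,1],[-1,1,-1,1],[-1,1,1,-1]}
   \<Longrightarrow> x \<in> perpB [1,1,1,1]"
  by (auto simp: perpB_def sign_vectors_def dotp_def)

lemma kcases:
  assumes L: "length v = length (filter (\<lambda>i. i\<in>I) [0,1,2,3])" and nz: "\<forall>a\<in>set v. a\<noteq>0" and ne: "v \<noteq> []"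
  and E1: "dotp v (nths [1,1,-1,-1] I) = 0" and E2: "dotp v (nths [1,-1,1,-1] I) = 0"
  and E3: "dotp v (nths [1,-1,-1,1] I) = 0" and E4: "dotp v (nths [-1,-1,1,1] I) = 0"
  and E5: "dotp v (nths [-1,1,-1,1] I) = 0" and E6: "dotp v (nths [-1,1,1,-1] I) = 0"
  shows "0 \<in> I \<and> 1 \<in> I \<and> 2 \<in> I \<and> 3 \<in> I \<and> (\<exists>c. v = [c,c,c,c])"
  using L E1 E2 E3 E4 E5 E6 nz ne
  apply (cases "0 \<in> I"; cases "1 \<in> I"; cases "2 \<in> I"; cases "3 \<in> I")
  apply (simp_all add: nths4)
  apply (auto simp: dotp_def length_Suc_conv numeral_eq_Suc)
  done

lemma key:
  assumes I: "I \<subseteq> {0..<4::nat}" "card I = length mu" and v: "v \<in> Vset mu" "is_partition mu"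
    and sub: "Proj I ` perpB [1,1,1,1] \<subseteq> perpB v"
  shows "\<exists>c. mu = [c,c,c,c] \<and> c \<ge> 1"
proof -
  have va: "mset (map abs v) = mset mu" "hd v > 0" "v \<noteq> []" using Vset_abs[OF v] by auto
  have lv: "length v = length mu" using va(1) by (metis length_map size_mset)
  have sv: "abs ` set v = set mu" using va(1) by (metis list.set_map set_mset_mset)
  have nz: "\<forall>a\<in>set v. a \<noteq> 0" using sv v(2) by (force simp: is_partition_def)
  have D: "\<And>x::int list. x \<in> {[1,1,-1,-1],[1,-1,1,-1],[1,-1,-1,1],[-1,-1,1,1],[-1,1,-1,1],[-1,1,1,-1]}
     \<Longrightarrow> dotp v (nths x I) = 0"
  proof -
    fix x :: "int list" assume "x \<in> {[1,1,-1,-1],[1,-1,1,-1],[1,-1,-1,1],[-1,-1,1,1],[-1,1,-1,1],[-1,1,1,-1]}"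
    then have "x \<in> perpB [1,1,1,1]" by (rule in_perp1)
    then have "Proj I x \<in> perpB v" using sub by blast
    then show "dotp v (nths x I) = 0" by (simp add: perpB_def Proj_def)
  qed
  have cI: "length v = length (filter (\<lambda>i. i\<in>I) [0,1,2,3])" using cardI[OF I(1)] I(2) lv by simp
  obtain c where c: "v = [c,c,c,c]"
    using kcases[OF cI nz va(3) D D D D D D] by auto
  have "c > 0" using va(2) c by simp
  have "set mu = {abs c}" using sv c by simp
  moreover have "length mu = 4" using lv c by simp
  ultimately have "mu = [abs c, abs c, abs c, abs c]"
    by (metis (no_types, lifting) len4 insert_iff list.set(2) singletonD subset_insertI set_subset_Cons
        list.set_intros(1) empty_iff)
  then show ?thesis using \<open>c > 0\<close> by auto
qed

lemma V1111: "[1,1,1,1] \<in> Vset [1,1,1,1]"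
  unfolding Vset_def by (rule CollectI, rule exI[of _ "[1,1,1,1]"], rule exI[of _ "[1,1,1,1]"])
    (simp add: sign_vectors_def)

lemma V11: "[1,1] \<in> Vset [1,1]"
  unfolding Vset_def by (rule CollectI, rule exI[of _ "[1,1]"], rule exI[of _ "[1,1]"])
    (simp add: sign_vectors_def)

lemma perp_scale: "(c::int) > 0 \<Longrightarrow> perpB [c,c,c,c] = perpB [1,1,1,1]"
proof -
  assume c: "c > 0"
  have "\<And>x. length x = 4 \<Longrightarrow> dotp [c,c,c,c] x = c * dotp [1,1,1,1] x"
    by (auto simp: dotp_def algebra_simps dest!: len4)
  then show ?thesis using c by (auto simp: perpB_def sign_vectors_def)
qed

lemma red_const: "(c::int) \<ge> 1 \<Longrightarrow> reduces [c,c,c,c] [1,1,1,1]"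
  unfolding reduces_def
proof (intro conjI exI[of _ "{0..<4}"] exI[of _ "[1,1,1,1]"])
  assume c: "c \<ge> 1"
  show "Proj {0..<4} ` perpB [c, c, c, c] \<subseteq> perpB [1, 1, 1, 1]"
  proof
    fix y assume "y \<in> Proj {0..<4} ` perpB [c, c, c, c]"
    then obtain x where x: "x \<in> perpB [c,c,c,c]" "y = Proj {0..<4} x" by blast
    then have "length x = 4" by (simp add: perpB_def sign_vectors_def)
    then have "Proj {0..<4} x = x" by (auto simp: Proj_def nths4 dest!: len4)
    then show "y \<in> perpB [1,1,1,1]" using x perp_scale[of c] c by simp
  qed
qed (auto simp: V1111)

lemma lex1111: "is_partition mu \<Longrightarrow> length mu = 4 \<Longrightarrow> lex_le [1,1,1,1] mu"
  by (auto simp: lex_le_def is_partition_def dest!: len4)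

lemma novel1111: "novel [1,1,1,1]"
  unfolding novel_def
proof (intro conjI allI impI)
  show "is_partition [1,1,1,1]" by (simp add: is_partition_def)
  show "perpB [1,1,1,1] \<noteq> {}" using in_perp1[of "[1,1,-1,-1]"] by auto
  fix mu
  { assume p: "is_partition mu"
    show "\<not> strictly_reduces [1,1,1,1] mu"
    proof
      assume "strictly_reduces [1,1,1,1] mu"
      then have r: "reduces [1,1,1,1] mu" "\<not> reduces mu [1,1,1,1]" by (auto simp: strictly_reduces_def)
      from r(1) obtain I v where I0: "I \<subseteq> {0..<length [1,1,1,1::int]}" and "card I = length mu" "v \<in> Vset mu"
          "Proj I ` perpB [1,1,1,1] \<subseteq> perpB v" unfolding reduces_def by blast
      moreover have "I \<subseteq> {0..<4}" using I0 by (simp add: numeral_eq_Suc)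
      ultimately obtain c where "mu = [c,c,c,c]" "c \<ge> 1" using key p by blast
      then show False using r(2) red_const by simp
    qed }
  assume "is_partition mu \<and> equivalent [1, 1, 1, 1] mu"
  then show "lex_le [1,1,1,1] mu" using lex1111 by (auto simp: equivalent_def)
qed

lemma perp_pair:
  assumes "is_partition [a,b,c,d]" "\<not> (a = b \<and> b = c \<and> c = d)"
    "x \<in> perpB [a,b,c,d]"
  shows "nths x {0,1} \<in> perpB [1,1]"
proof -
  have "length x = 4" using assms(3) by (simp add: perpB_def sign_vectors_def)
  then obtain x0 x1 x2 x3 where x: "x = [x0,x1,x2,x3]" using len4 by blast
  have s: "x0 \<in> {-1,1}" "x1 \<in> {-1,1}" "x2 \<in> {-1,1}" "x3 \<in> {-1,1}"
    and e: "a*x0+b*x1+c*x2+d*x3 = 0" using assms(3) x by (auto simp: perpB_def sign_vectors_def dotp_def)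
  have o: "a \<ge> b" "b \<ge> c" "c \<ge> d" "d \<ge> 1" using assms(1) by (auto simp: is_partition_def)
  have "x0 + x1 = 0" using s e o assms(2) by auto
  then show ?thesis using x s by (simp add: nths4 perpB_def sign_vectors_def dotp_def)
qed

lemma not_novel:
  assumes p: "is_partition l" and L: "length l = 4" and n: "l \<noteq> [1,1,1,1]"
  shows "\<not> novel l"
proof
  assume nv: "novel l"
  obtain a b c d where l: "l = [a,b,c,d]" using len4[OF L] by blast
  have o: "a \<ge> b" "b \<ge> c" "c \<ge> d" "d \<ge> 1" using p l by (auto simp: is_partition_def)
  show False
  proof (cases "a = b \<and> b = c \<and> c = d")
    case True
    then have "a > 1" using n l o by auto
    have "equivalent l [1,1,1,1]" unfolding equivalent_def
      using V1111 perp_scale[of a] \<open>a > 1\<close> l True L by auto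
    moreover have "is_partition [1,1,1,1::int]" by (simp add: is_partition_def)
    moreover have "\<not> lex_le l [1,1,1,1]" using \<open>a > 1\<close> l by (auto simp: lex_le_def)
    ultimately show False using nv unfolding novel_def by blast
  next
    case False
    have "reduces l [1,1]" unfolding reduces_def
    proof (intro conjI exI[of _ "{0,1}"] exI[of _ "[1,1]"])
      show "Proj {0, 1} ` perpB l \<subseteq> perpB [1, 1]"
        using perp_pair[OF p[unfolded l] False] l by (auto simp: Proj_def)
    qed (use L V11 in auto)
    moreover have "\<not> reduces [1,1] l" using L by (simp add: reduces_def)
    moreover have "is_partition [1,1::int]" by (simp add: is_partition_def)
    ultimately show False using nv unfolding novel_def strictly_reduces_def by blast
  qed
qed

theorem mainTheorem8:
  shows "\<forall>l. is_partition l \<and> length l = 4 \<longrightarrow> (novel l \<longleftrightarrow> l = [1, 1, 1, 1])"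
  using not_novel novel1111 by blast

end
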